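(* There exist an integer $k \geq 1$ and maximum speeds $v_1, \dots, v_k > 0$ for which the partition-based strategy is not optimal: for some $l > (v_1 + \dots + v_k)/2$ there is a strategy for $k$ agents with maximum speeds $v_1, \dots, v_k$ that patrols the fence $[0, l]$.
   Context: Fence patrolling: a fence is a segment $[0,l]$ with $l>0$. There are $k$ agents $a_1,\dots,a_k$ with given maximum speeds $v_1,\dots,v_k>0$. The motion of agent $a_i$ is a function $a_i\colon[0,\infty)\to[0,l]$ satisfying $|a_i(t)-a_i(t+\epsilon)|\le v_i\epsilon$ for all $t\ge 0$, $\epsilon>0$. Agents may move in both directions and may pass each other. A strategy is a $k$-tuple $(a_1,\dots,a_k)$ of such functions. Agent $a_i$ covers the pair $(x;t^* )$ if $a_i(t)=x$ for some $t\in[t^*-1,t^* )$. A strategy patrols $[0,l]$ if for every $x\in[0,l]$ and every $t^*\in[1,\infty)$ some agent $a_i$ covers $(x;t^* )$. The partition-based strategy splits $[0,l]$ into $k$ consecutive segments of lengths proportional to $v_1,\dots,v_k$, with agent $a_i$ moving back and forth at full speed between the endpoints of the $i$-th segment; it patrols a fence of length $(v_1+\dots+v_k)/2$. It is called optimal for given speeds if no strategy for those speeds patrols a fence longer than $(v_1+\dots+v_k)/2$. *)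

theory Defs
  imports Complex_Main
begin

definition valid_motion :: "real \<Rightarrow> real \<Rightarrow> (real \<Rightarrow> real) \<Rightarrow> bool" where
  "valid_motion l vi ai \<longleftrightarrow>
     (\<forall>t\<ge>0. 0 \<le> ai t \<and> ai t \<le> l) \<and>
     (\<forall>t\<ge>0. \<forall>\<epsilon>>0. \<bar>ai t - ai (t + \<epsilon>)\<bar> \<le> vi * \<epsilon>)"

definition is_strategy :: "nat \<Rightarrow> (nat \<Rightarrow> real) \<Rightarrow> real \<Rightarrow> (nat \<Rightarrow> real \<Rightarrow> real) \<Rightarrow> bool" where
  "is_strategy k v l a \<longleftrightarrow> (\<forall>i<k. valid_motion l (v i) (a i))"

definition covers :: "(real \<Rightarrow> real) \<Rightarrow> real \<Rightarrow> real \<Rightarrow> bool" where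
  "covers ai x tstar \<longleftrightarrow> (\<exists>t. tstar - 1 \<le> t \<and> t < tstar \<and> ai t = x)"

definition patrols :: "nat \<Rightarrow> real \<Rightarrow> (nat \<Rightarrow> real \<Rightarrow> real) \<Rightarrow> bool" where
  "patrols k l a \<longleftrightarrow>
     (\<forall>x. 0 \<le> x \<and> x \<le> l \<longrightarrow> (\<forall>tstar\<ge>1. \<exists>i<k. covers (a i) x tstar))"

end

theory Submission
  imports Defs
begin
definition tw :: "real \<Rightarrow> real" where "tw y = \<bar>frac y - 1/2\<bar>"
lemma tw_range: "0 \<le> tw y" "tw y \<le> 1/2"
proof -
  have "0 \<le> frac y" "frac y < 1" by (auto simp: frac_lt_1)
  then show "0 \<le> tw y" "tw y \<le> 1/2" unfolding tw_def by (auto simp: abs_if)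
qed
lemma tw_lip: "\<bar>tw y - tw z\<bar> \<le> \<bar>y - z\<bar>"
proof -
  have main: "\<bar>tw y - tw z\<bar> \<le> z - y" if yz: "y \<le> z" for y z :: real
  proof (cases "z - y \<ge> 1")
    case True
    then show ?thesis using tw_range[of y] tw_range[of z] by linarith
  next
    case False
    have f1: "\<lfloor>y\<rfloor> \<le> \<lfloor>z\<rfloor>" using yz by (rule floor_mono)
    have "\<lfloor>z\<rfloor> \<le> \<lfloor>y + 1\<rfloor>" using False by (intro floor_mono) simp
    then have f2: "\<lfloor>z\<rfloor> \<le> \<lfloor>y\<rfloor> + 1" by simp
    have fy: "frac y = y - \<lfloor>y\<rfloor>" "frac z = z - \<lfloor>z\<rfloor>" by (simp_all add: frac_def)
    have b: "0 \<le> frac y" "frac y < 1" "0 \<le> frac z" "frac z < 1" by (auto simp: frac_lt_1)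
    consider "\<lfloor>z\<rfloor> = \<lfloor>y\<rfloor>" | "\<lfloor>z\<rfloor> = \<lfloor>y\<rfloor> + 1" using f1 f2 by linarith
    then show ?thesis
    proof cases
      case 1
      then have "frac z - frac y = z - y" using fy by simp
      moreover have "\<bar>tw y - tw z\<bar> \<le> \<bar>frac y - frac z\<bar>" unfolding tw_def by (rule abs_triangle_ineq3[THEN order_trans]) simp
      ultimately show ?thesis using yz by simp
    next
      case 2
      then have e: "frac z = frac y + (z - y) - 1" using fy by simp
      show ?thesis unfolding tw_def e using b e False yz
        by (cases "frac y \<le> 1/2"; cases "frac y + (z - y) - 1 \<le> 1/2"; simp add: abs_le_iff; linarith)
    qed
  qed
  show ?thesis
  proof (cases "y \<le> z")
    case True then show ?thesis using main[OF True] by simp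
  next
    case False then have "z \<le> y" by simp
    from main[OF this] show ?thesis by (simp add: abs_minus_commute)
  qed
qed
definition zig :: "real \<Rightarrow> real \<Rightarrow> real" where "zig P u = P/2 - P * tw (u/P)"

lemma zig_range: "P > 0 \<Longrightarrow> 0 \<le> zig P u \<and> zig P u \<le> P/2"
proof -
  assume P: "P > 0"
  have "0 \<le> P * tw (u/P)" "P * tw (u/P) \<le> P * (1/2)" using tw_range[of "u/P"] P by auto
  then show ?thesis unfolding zig_def by simp
qed

lemma zig_lip: "P > 0 \<Longrightarrow> \<bar>zig P u - zig P w\<bar> \<le> \<bar>u - w\<bar>"
proof -
  assume P: "P > 0"
  have e1: "zig P u - zig P w = P * (tw (w/P) - tw (u/P))" unfolding zig_def by (simp add: algebra_simps)
  have "\<bar>zig P u - zig P w\<bar> = P * \<bar>tw (u/P) - tw (w/P)\<bar>"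
    unfolding e1 using P by (simp add: abs_mult abs_minus_commute)
  also have "\<dots> \<le> P * \<bar>u/P - w/P\<bar>" using tw_lip P by (intro mult_left_mono) auto
  also have "\<bar>u/P - w/P\<bar> = \<bar>u - w\<bar> / P" using P by (simp add: diff_divide_distrib[symmetric])
  also have "P * (\<bar>u - w\<bar> / P) = \<bar>u - w\<bar>" using P by simp
  finally show ?thesis .
qed

lemma zig_plus: assumes "P > 0" "0 \<le> e" "e \<le> P/2" shows "zig P (e + P * of_int m) = e"
proof -
  have q: "(e + P * of_int m)/P = e/P + of_int m" using assms by (simp add: add_divide_distrib)
  have l1: "e/P < 1" using assms by (simp add: divide_less_eq)
  have "0 \<le> e/P" using assms by simp
  then have fr: "frac ((e + P * of_int m)/P) = e/P" unfolding q using l1 by simp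
  have "e/P \<le> 1/2" using assms by (simp add: divide_le_eq)
  then have ab: "\<bar>e/P - 1/2\<bar> = 1/2 - e/P" by simp
  show ?thesis unfolding zig_def tw_def fr ab using assms by (simp add: right_diff_distrib)
qed

lemma zig_minus: assumes "P > 0" "0 \<le> e" "e \<le> P/2" shows "zig P (- e + P * of_int m) = e"
proof (cases "e = 0")
  case True
  have "(P * of_int m) / P = of_int m" using assms by simp
  then show ?thesis using assms True unfolding zig_def tw_def by simp
next
  case False
  have q: "(- e + P * of_int m)/P = (1 - e/P) + of_int (m - 1)" using assms by (simp add: field_simps)
  have "0 < e" using assms False by simp
  then have "0 < e/P" using assms by simp
  then have l1: "1 - e/P < 1" by simp
  have "e/P \<le> 1/2" using assms by (simp add: divide_le_eq)
  then have l0: "0 \<le> 1 - e/P" by linarith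
  have fr0: "frac (1 - e/P) = 1 - e/P" using l1 l0 by (intro frac_eq_id) simp
  have fr: "frac ((- e + P * of_int m)/P) = 1 - e/P" unfolding q frac_add_of_int_right fr0 ..
  have ab: "\<bar>1 - e/P - 1/2\<bar> = 1/2 - e/P" using \<open>e/P \<le> 1/2\<close> by simp
  show ?thesis unfolding zig_def tw_def fr ab using assms by (simp add: right_diff_distrib)
qed

definition pos :: "real \<Rightarrow> real \<Rightarrow> real \<Rightarrow> real \<Rightarrow> real \<Rightarrow> real" where
  "pos b v P ph t = b + v * zig P (t - ph)"

lemma pos_valid:
  assumes "0 \<le> b" "b + v * (P/2) \<le> l" "v > 0" "P > 0"
  shows "valid_motion l v (pos b v P ph)"
  unfolding valid_motion_def
proof (intro conjI allI impI)
  fix t :: real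
  have z: "0 \<le> zig P (t - ph)" "zig P (t - ph) \<le> P/2" using zig_range[OF assms(4)] by auto
  have h1: "v * zig P (t - ph) \<le> v * (P/2)" using z assms(3) by (intro mult_left_mono) auto
  have h2: "0 \<le> v * zig P (t - ph)" using z assms(3) by simp
  show "0 \<le> pos b v P ph t" "pos b v P ph t \<le> l" unfolding pos_def using h1 h2 assms(1,2) by linarith+
next
  fix t \<epsilon> :: real assume "0 \<le> t" "0 < \<epsilon>"
  have "\<bar>pos b v P ph t - pos b v P ph (t + \<epsilon>)\<bar> = v * \<bar>zig P (t - ph) - zig P (t + \<epsilon> - ph)\<bar>"
    unfolding pos_def using assms(3) by (simp add: abs_mult right_diff_distrib[symmetric])
  also have "\<dots> \<le> v * \<bar>(t - ph) - (t + \<epsilon> - ph)\<bar>" using zig_lip[OF assms(4), of "t - ph" "t + \<epsilon> - ph"] assms(3)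
    by (intro mult_left_mono) auto
  also have "\<dots> = v * \<epsilon>" using \<open>0 < \<epsilon>\<close> by simp
  finally show "\<bar>pos b v P ph t - pos b v P ph (t + \<epsilon>)\<bar> \<le> v * \<epsilon>" .
qed

lemma cov_plus:
  assumes "P > 0" "0 \<le> e" "e \<le> P/2" "x = b + v * e"
    "ts - 1 \<le> ph + e + P * of_int m" "ph + e + P * of_int m < ts"
  shows "covers (pos b v P ph) x ts"
  unfolding covers_def
proof (intro exI conjI)
  show "ts - 1 \<le> ph + e + P * of_int m" "ph + e + P * of_int m < ts" by fact+
  have "ph + e + P * of_int m - ph = e + P * of_int m" by simp
  then show "pos b v P ph (ph + e + P * of_int m) = x"
    unfolding pos_def using zig_plus[OF assms(1-3)] assms(4) by simp
qed

lemma cov_minus: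
  assumes "P > 0" "0 \<le> e" "e \<le> P/2" "x = b + v * e"
    "ts - 1 \<le> ph - e + P * of_int m" "ph - e + P * of_int m < ts"
  shows "covers (pos b v P ph) x ts"
  unfolding covers_def
proof (intro exI conjI)
  show "ts - 1 \<le> ph - e + P * of_int m" "ph - e + P * of_int m < ts" by fact+
  have "ph - e + P * of_int m - ph = - e + P * of_int m" by simp
  then show "pos b v P ph (ph - e + P * of_int m) = x"
    unfolding pos_def using zig_minus[OF assms(1-3)] assms(4) by simp
qed

lemma ex_m: fixes P c t :: real assumes "P > 0" shows "\<exists>m::int. c < t - P * of_int m \<and> t - P * of_int m \<le> c + P"
proof -
  define m where "m = \<lceil>(t - c)/P\<rceil> - 1"
  have "of_int m < (t - c)/P" "(t - c)/P \<le> of_int m + 1" unfolding m_def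
    by (simp_all add: ceiling_correct le_of_int_ceiling)
  then have "P * of_int m < t - c" "t - c \<le> P * of_int m + P" using assms
    by (simp_all add: field_simps)
  then show ?thesis by (intro exI[of _ m]) auto
qed

definition aA :: "nat \<Rightarrow> real \<Rightarrow> real" where "aA j = pos (9/4 * real j) 3 3 0"
definition aB :: "nat \<Rightarrow> real \<Rightarrow> real" where "aB j = pos (3/2 + 9/4 * real j) 1 3 (1/2)"
definition ag :: "nat \<Rightarrow> real \<Rightarrow> real" where
  "ag i = (if i < 10 then aA i else if i < 20 then aB (i - 10) else if i = 20 then pos 0 (9/2) 1 0 else pos (45/2) (9/2) 1 0)"
definition vv :: "nat \<Rightarrow> real" where
  "vv i = (if i < 10 then 3 else if i < 20 then 1 else 9/2)"

lemma exq: "q < 22 \<Longrightarrow> covers (ag q) x ts \<Longrightarrow> \<exists>q<22. covers (ag q) x ts" by blast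

lemma mid:
  assumes i: "i \<le> 8" and s: "0 \<le> s" "s < 9/4"
  shows "\<exists>q<22. covers (ag q) (9/4 * (real i + 1) + s) ts"
proof -
  define x where "x = 9/4 * (real i + 1) + s"
  define a where "a = s/3"
  have sa: "s = 3 * a" unfolding a_def by simp
  have A1: "ag (Suc i) = pos (9/4 * (real i + 1)) 3 3 0" using i by (simp add: ag_def aA_def algebra_simps)
  have A0: "ag i = pos (9/4 * real i) 3 3 0" using i by (simp add: ag_def aA_def algebra_simps)
  have B0: "ag (10 + i) = pos (3/2 + 9/4 * real i) 1 3 (1/2)" using i by (simp add: ag_def aB_def algebra_simps)
  have B1: "ag (11 + i) = pos (3/2 + 9/4 * (real i + 1)) 1 3 (1/2)" using i by (simp add: ag_def aB_def algebra_simps)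
  obtain m :: int where m: "- a < ts - 3 * of_int m" "ts - 3 * of_int m \<le> - a + 3"
    using ex_m[of 3 "-a" ts] by auto
  have m1: "3 * real_of_int (m + 1) = 3 * of_int m + 3" by simp
  have xA1: "x = 9/4 * (real i + 1) + 3 * a" unfolding x_def sa by simp
  have xA0: "x = 9/4 * real i + 3 * (a + 3/4)" unfolding x_def sa by (simp add: algebra_simps)
  have xB0: "x = (3/2 + 9/4 * real i) + 1 * (s + 3/4)" unfolding x_def by (simp add: algebra_simps)
  have xB1: "x = (3/2 + 9/4 * (real i + 1)) + 1 * (s - 3/2)" unfolding x_def by (simp add: algebra_simps)
  have Si: "Suc i < 22" "i < 22" "10 + i < 22" "11 + i < 22" using i by auto
  consider "s \<le> 3/4" | "3/4 \<le> s" "s \<le> 3/2" | "3/2 \<le> s" by linarith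
  then have "\<exists>q<22. covers (ag q) x ts"
  proof cases
    case R: 1
    consider "ts - 3 * of_int m \<le> a" | "a < ts - 3 * of_int m" "ts - 3 * of_int m \<le> 3/4 + a"
      | "3/4 + a < ts - 3 * of_int m" "ts - 3 * of_int m \<le> 5/4 + 3 * a"
      | "5/4 + 3 * a < ts - 3 * of_int m" "ts - 3 * of_int m \<le> 9/4 - a"
      | "9/4 - a < ts - 3 * of_int m" by linarith
    then show ?thesis
    proof cases
      case 1
      have "covers (ag (Suc i)) x ts" unfolding A1
        by (rule cov_minus[OF _ _ _ xA1, where m="m"]) (use 1 m s sa R in linarith)+
      then show ?thesis using Si by (intro exq)
    next
      case 2
      have "covers (ag (Suc i)) x ts" unfolding A1
        by (rule cov_plus[OF _ _ _ xA1, where m="m"]) (use 2 m s sa R in linarith)+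
      then show ?thesis using Si by (intro exq)
    next
      case 3
      have "covers (ag (i)) x ts" unfolding A0
        by (rule cov_plus[OF _ _ _ xA0, where m="m"]) (use 3 m s sa R in linarith)+
      then show ?thesis using Si by (intro exq)
    next
      case 4
      have "covers (ag (10 + i)) x ts" unfolding B0
        by (rule cov_plus[OF _ _ _ xB0, where m="m"]) (use 4 m s sa R in linarith)+
      then show ?thesis using Si by (intro exq)
    next
      case 5
      have "covers (ag (i)) x ts" unfolding A0
        by (rule cov_minus[OF _ _ _ xA0, where m="m+1"]) (use 5 m s sa R m1 in linarith)+
      then show ?thesis using Si by (intro exq)
    qed
  next
    case R: 2
    consider "ts - 3 * of_int m \<le> a" | "a < ts - 3 * of_int m" "ts - 3 * of_int m \<le> 3/4 + a"
      | "3/4 + a < ts - 3 * of_int m" "ts - 3 * of_int m \<le> 9/4 - a"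
      | "9/4 - a < ts - 3 * of_int m" by linarith
    then show ?thesis
    proof cases
      case 1
      have "covers (ag (Suc i)) x ts" unfolding A1
        by (rule cov_minus[OF _ _ _ xA1, where m="m"]) (use 1 m s sa R in linarith)+
      then show ?thesis using Si by (intro exq)
    next
      case 2
      have "covers (ag (Suc i)) x ts" unfolding A1
        by (rule cov_plus[OF _ _ _ xA1, where m="m"]) (use 2 m s sa R in linarith)+
      then show ?thesis using Si by (intro exq)
    next
      case 3
      have "covers (ag (i)) x ts" unfolding A0
        by (rule cov_plus[OF _ _ _ xA0, where m="m"]) (use 3 m s sa R in linarith)+
      then show ?thesis using Si by (intro exq)
    next
      case 4
      have "covers (ag (i)) x ts" unfolding A0
        by (rule cov_minus[OF _ _ _ xA0, where m="m+1"]) (use 4 m s sa R m1 in linarith)+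
      then show ?thesis using Si by (intro exq)
    qed
  next
    case R: 3
    consider "ts - 3 * of_int m \<le> 2 - 3 * a" | "2 - 3 * a < ts - 3 * of_int m" "ts - 3 * of_int m \<le> a"
      | "a < ts - 3 * of_int m" "ts - 3 * of_int m \<le> 3/4 + a"
      | "3/4 + a < ts - 3 * of_int m" "ts - 3 * of_int m \<le> 9/4 - a"
      | "9/4 - a < ts - 3 * of_int m" by linarith
    then show ?thesis
    proof cases
      case 1
      have "covers (ag (Suc i)) x ts" unfolding A1
        by (rule cov_minus[OF _ _ _ xA1, where m="m"]) (use 1 m s sa R in linarith)+
      then show ?thesis using Si by (intro exq)
    next
      case 2
      have "covers (ag (11 + i)) x ts" unfolding B1
        by (rule cov_minus[OF _ _ _ xB1, where m="m"]) (use 2 m s sa R in linarith)+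
      then show ?thesis using Si by (intro exq)
    next
      case 3
      have "covers (ag (Suc i)) x ts" unfolding A1
        by (rule cov_plus[OF _ _ _ xA1, where m="m"]) (use 3 m s sa R in linarith)+
      then show ?thesis using Si by (intro exq)
    next
      case 4
      have "covers (ag (i)) x ts" unfolding A0
        by (rule cov_plus[OF _ _ _ xA0, where m="m"]) (use 4 m s sa R in linarith)+
      then show ?thesis using Si by (intro exq)
    next
      case 5
      have "covers (ag (i)) x ts" unfolding A0
        by (rule cov_minus[OF _ _ _ xA0, where m="m+1"]) (use 5 m s sa R m1 in linarith)+
      then show ?thesis using Si by (intro exq)
    qed
  qed
  then show ?thesis unfolding x_def .
qed

lemma cap:
  assumes "0 \<le> e" "e \<le> 1/2" "x = b + 9/2 * e"
  shows "\<exists>m::int. covers (pos b (9/2) 1 0) x ts"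
proof -
  obtain m :: int where m: "- e < ts - 1 * of_int m" "ts - 1 * of_int m \<le> - e + 1"
    using ex_m[of 1 "-e" ts] by auto
  show ?thesis
  proof (cases "ts - of_int m \<le> e")
    case True
    have "covers (pos b (9/2) 1 0) x ts"
      by (rule cov_minus[OF _ _ _ assms(3), where m=m]) (use True m assms in linarith)+
    then show ?thesis ..
  next
    case False
    have "covers (pos b (9/2) 1 0) x ts"
      by (rule cov_plus[OF _ _ _ assms(3), where m=m]) (use False m assms in linarith)+
    then show ?thesis ..
  qed
qed

lemma sum_vv: "(\<Sum>i<22. vv i) = 49"
  by (simp add: vv_def eval_nat_numeral)

theorem theorem1:
  shows "\<exists>(k::nat) (v::nat \<Rightarrow> real). k \<ge> 1 \<and> (\<forall>i<k. v i > 0) \<and>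
           (\<exists>l a. l > (\<Sum>i<k. v i) / 2 \<and> is_strategy k v l a \<and> patrols k l a)"
proof (intro exI conjI)
  show "(1::nat) \<le> 22" by simp
  show "\<forall>i<22. vv i > 0" by (simp add: vv_def)
  show "99/4 > (\<Sum>i<22. vv i) / 2" unfolding sum_vv by simp
  show "is_strategy 22 vv (99/4) ag"
    unfolding is_strategy_def
  proof (intro allI impI)
    fix i :: nat assume i: "i < 22"
    consider "i < 10" | "10 \<le> i" "i < 20" | "i = 20" | "i = 21" using i by linarith
    then show "valid_motion (99/4) (vv i) (ag i)"
    proof cases
      case 1
      then have "real i \<le> 9" by simp
      then show ?thesis using 1 unfolding ag_def vv_def aA_def by (simp, intro pos_valid) auto
    next
      case 2
      then have "real (i - 10) \<le> 9" by simp
      then show ?thesis using 2 unfolding ag_def vv_def aB_def by (simp, intro pos_valid) auto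
    next
      case 3 then show ?thesis unfolding ag_def vv_def by (simp, intro pos_valid) auto
    next
      case 4 then show ?thesis unfolding ag_def vv_def by (simp, intro pos_valid) auto
    qed
  qed
  show "patrols 22 (99/4) ag"
    unfolding patrols_def
  proof (intro allI impI)
    fix x ts :: real assume x: "0 \<le> x \<and> x \<le> 99/4" and "1 \<le> ts"
    consider "x \<le> 9/4" | "45/2 \<le> x" | "9/4 < x" "x < 45/2" by linarith
    then show "\<exists>i<22. covers (ag i) x ts"
    proof cases
      case 1
      have "ag 20 = pos 0 (9/2) 1 0" by (simp add: ag_def)
      moreover obtain m :: int where "covers (pos 0 (9/2) 1 0) x ts"
        using cap[of "2*x/9" x 0 ts] x 1 by auto
      ultimately show ?thesis by (intro exq[of 20]) auto
    next
      case 2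
      have a21: "ag 21 = pos (45/2) (9/2) 1 0" by (simp add: ag_def)
      have eq: "x = 45/2 + 9/2 * (2*(x - 45/2)/9)" by (simp add: field_simps)
      have "0 \<le> 2*(x - 45/2)/9" "2*(x - 45/2)/9 \<le> 1/2" using x 2 by auto
      then obtain m :: int where "covers (pos (45/2) (9/2) 1 0) x ts"
        using cap[of "2*(x - 45/2)/9" x "45/2" ts] eq by blast
      with a21 show ?thesis by (intro exq[of 21]) auto
    next
      case 3
      define f where "f = \<lfloor>4 * x / 9\<rfloor>"
      have f1: "1 \<le> f" unfolding f_def using 3 by (simp add: le_floor_iff)
      have f2: "f \<le> 9" unfolding f_def using 3 by (simp add: floor_le_iff)
      have fl: "of_int f \<le> 4 * x / 9" "4 * x / 9 < of_int f + 1" unfolding f_def by linarith+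
      define i where "i = nat (f - 1)"
      have ri: "real i + 1 = of_int f" unfolding i_def using f1 by simp
      have i8: "i \<le> 8" unfolding i_def using f2 by simp
      define s where "s = x - 9/4 * (real i + 1)"
      have s0: "0 \<le> s" "s < 9/4" unfolding s_def ri using fl by linarith+
      have "x = 9/4 * (real i + 1) + s" unfolding s_def by simp
      then show ?thesis using mid[OF i8 s0] by simp
    qed
  qed
qed

end
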